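(* Let $g \ge h \ge 2$ be integers. There is a constant $c>0$ depending only on $g$ and $h$ such that for every positive integer $n$ there exists a weak-$C_h[g]$ set $A \subset \{1,2,\dots,n\}$ with $$|A| \ge c\, n^{\left(1-\frac{1}{h}\right)\left(1-\frac{1}{g}\right)\left(1+\frac{1}{hg-1}\right)}.$$
   Context: A set of integers $A$ is called a weak-$C_h[g]$ set if for every set $X$ of $h$ integers there do not exist $g$ distinct integers $k_1,\dots,k_g$ such that the translates $X+k_1,\dots,X+k_g$ are pairwise disjoint and all contained in $A$ (here $X+k=\{x+k : x\in X\}$). In words, $A$ contains no $g$ pairwise disjoint translates of a common $h$-element set. *)

theory Defs
  imports "HOL-Analysis.Analysis"
begin

definition translate :: "int set \<Rightarrow> int \<Rightarrow> int set" where
  "translate X k = (\<lambda>x. x + k) ` X"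

definition weak_Ch_g :: "nat \<Rightarrow> nat \<Rightarrow> int set \<Rightarrow> bool" where
  "weak_Ch_g h g A \<longleftrightarrow>
     \<not> (\<exists>X K. finite X \<and> card X = h \<and> finite K \<and> card K = g \<and>
           (\<forall>k\<in>K. translate X k \<subseteq> A) \<and>
           (\<forall>k\<in>K. \<forall>k'\<in>K. k \<noteq> k' \<longrightarrow> translate X k \<inter> translate X k' = {}))"

end

theory Submission
  imports Defs
begin

lemma count_super:
  assumes "finite U" "T \<subseteq> U" "card T \<le> m"
  shows "card {S. S \<subseteq> U \<and> card S = m \<and> T \<subseteq> S} = (card U - card T) choose (m - card T)"
proof -
  have fT: "finite T" using assms finite_subset by blast
  have eq: "{S. S \<subseteq> U \<and> card S = m \<and> T \<subseteq> S} = (\<lambda>R. R \<union> T) ` {R. R \<subseteq> U - T \<and> card R = m - card T}"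
  proof (rule set_eqI, rule iffI)
    fix S assume S: "S \<in> {S. S \<subseteq> U \<and> card S = m \<and> T \<subseteq> S}"
    then have fS: "finite S" using assms finite_subset by blast
    have "card (S - T) = m - card T" using S fT by (simp add: card_Diff_subset)
    moreover have "S = (S - T) \<union> T" using S by blast
    ultimately show "S \<in> (\<lambda>R. R \<union> T) ` {R. R \<subseteq> U - T \<and> card R = m - card T}"
      using S by blast
  next
    fix S assume "S \<in> (\<lambda>R. R \<union> T) ` {R. R \<subseteq> U - T \<and> card R = m - card T}"
    then obtain R where R: "R \<subseteq> U - T" "card R = m - card T" "S = R \<union> T" by blast
    have fR: "finite R" using R assms finite_subset by (metis finite_Diff)
    have "card S = card R + card T" unfolding R(3) by (rule card_Un_disjoint) (use R fR fT in auto)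
    then show "S \<in> {S. S \<subseteq> U \<and> card S = m \<and> T \<subseteq> S}" using R assms by auto
  qed
  have inj: "inj_on (\<lambda>R. R \<union> T) {R. R \<subseteq> U - T \<and> card R = m - card T}"
    by (rule inj_onI) blast
  have "card {S. S \<subseteq> U \<and> card S = m \<and> T \<subseteq> S} = card {R. R \<subseteq> U - T \<and> card R = m - card T}"
    unfolding eq using inj by (rule card_image)
  also have "\<dots> = card (U - T) choose (m - card T)" using assms by (simp add: n_subsets)
  also have "card (U - T) = card U - card T" using assms fT by (simp add: card_Diff_subset)
  finally show ?thesis .
qed

lemma binom_ratio:
  fixes m n t :: nat
  assumes "t \<le> m" "m \<le> n"
  shows "real (m choose t) * real n ^ t \<le> real (n choose t) * real m ^ t"
  using assms(1)
proof (induction t)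
  case 0 then show ?case by simp
next
  case (Suc t)
  have IH: "real (m choose t) * real n ^ t \<le> real (n choose t) * real m ^ t" using Suc by simp
  have gen: "(k choose Suc t) * Suc t = (k choose t) * (k - t)" if kk: "Suc t \<le> k" for k
  proof -
    obtain k' where k: "k = Suc k'" using kk by (metis Suc_le_D)
    have "Suc t * (Suc k' choose Suc t) = Suc k' * (k' choose t)" by (rule Suc_times_binomial)
    moreover have "(Suc k' - t) * (Suc k' choose t) = Suc k' * ((Suc k' - 1) choose t)" by (rule binomial_absorb_comp)
    ultimately show ?thesis using k by (simp add: mult.commute)
  qed
  have e1: "real (m choose Suc t) * real (Suc t) = real (m choose t) * (real m - real t)"
    using gen[of m] Suc.prems by (metis of_nat_mult of_nat_diff Suc_leD)
  have e2: "real (n choose Suc t) * real (Suc t) = real (n choose t) * (real n - real t)"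
    using gen[of n] Suc.prems assms(2) by (metis of_nat_mult of_nat_diff Suc_leD le_trans)
  have key: "(real m - real t) * real n \<le> (real n - real t) * real m"
    using assms(2) by (simp add: algebra_simps mult_right_mono)
  have "real (m choose Suc t) * real n ^ Suc t * real (Suc t)
      = (real (m choose Suc t) * real (Suc t)) * (real n ^ t * real n)" by simp
  also have "\<dots> = (real (m choose t) * real n ^ t) * ((real m - real t) * real n)"
    unfolding e1 by simp
  also have "\<dots> \<le> (real (n choose t) * real m ^ t) * ((real n - real t) * real m)"
    apply (rule mult_mono[OF IH key])
    using Suc.prems assms by auto
  also have "\<dots> = (real (n choose t) * (real n - real t)) * (real m ^ t * real m)" by simp
  also have "\<dots> = real (n choose Suc t) * real m ^ Suc t * real (Suc t)"
    unfolding e2[symmetric] by simp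
  finally show ?case by simp
qed

lemma sub_count_bound:
  assumes "finite U" "card U = n" "T \<subseteq> U" "card T = t" "m \<le> n"
  shows "real (card {S. S \<subseteq> U \<and> card S = m \<and> T \<subseteq> S}) * real n ^ t \<le> real (n choose m) * real m ^ t"
proof (cases "t \<le> m")
  case True
  have c: "card {S. S \<subseteq> U \<and> card S = m \<and> T \<subseteq> S} = (n - t) choose (m - t)"
    using count_super[OF assms(1,3)] True assms by simp
  have cm: "(n choose m) * (m choose t) = (n choose t) * ((n - t) choose (m - t))"
    using choose_mult[OF True assms(5)] .
  have pos: "real (n choose t) > 0" using True assms(5) by simp
  have "real ((n - t) choose (m - t)) * real n ^ t * real (n choose t)
      = real (n choose m) * (real (m choose t) * real n ^ t)"
    using arg_cong[OF cm, of real] by (simp add: algebra_simps)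
  also have "\<dots> \<le> real (n choose m) * (real (n choose t) * real m ^ t)"
    by (rule mult_left_mono[OF binom_ratio[OF True assms(5)]]) simp
  finally have "real ((n - t) choose (m - t)) * real n ^ t * real (n choose t)
      \<le> real (n choose m) * real m ^ t * real (n choose t)" by (simp add: algebra_simps)
  then show ?thesis using c pos by simp
next
  case False
  have "{S. S \<subseteq> U \<and> card S = m \<and> T \<subseteq> S} = {}"
  proof (rule ccontr)
    assume "{S. S \<subseteq> U \<and> card S = m \<and> T \<subseteq> S} \<noteq> {}"
    then obtain S where S: "S \<subseteq> U" "card S = m" "T \<subseteq> S" by blast
    have "card T \<le> card S" using S assms(1) finite_subset card_mono by metis
    then show False using S False assms by simp
  qed
  then show ?thesis by (simp del: Collect_empty_eq)
qed

definition pts :: "int set \<Rightarrow> int set \<Rightarrow> int set" where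
  "pts X K = (\<Union>k\<in>K. translate X k)"

definition cfg :: "nat \<Rightarrow> nat \<Rightarrow> int set \<Rightarrow> int set \<Rightarrow> bool" where
  "cfg h g X K \<longleftrightarrow> finite X \<and> card X = h \<and> finite K \<and> card K = g \<and>
     (\<forall>k\<in>K. \<forall>k'\<in>K. k \<noteq> k' \<longrightarrow> translate X k \<inter> translate X k' = {})"

lemma weak_iff: "weak_Ch_g h g A \<longleftrightarrow> \<not> (\<exists>X K. cfg h g X K \<and> pts X K \<subseteq> A)"
  unfolding weak_Ch_g_def cfg_def pts_def UN_subset_iff by (simp add: conj_ac)

lemma pts_eq: "pts X K = (\<lambda>(x,k). x + k) ` (X \<times> K)"
  unfolding pts_def translate_def by auto

lemma card_pts:
  assumes "cfg h g X K"
  shows "card (pts X K) = h * g"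
proof -
  have c: "card (translate X k) = h" for k
  proof -
    have "card (translate X k) = card X" unfolding translate_def
      by (rule card_image) (simp add: inj_on_def)
    then show ?thesis using assms unfolding cfg_def by simp
  qed
  have fK: "finite K" and fX: "finite X" and dj: "\<forall>k\<in>K. \<forall>k'\<in>K. k \<noteq> k' \<longrightarrow> translate X k \<inter> translate X k' = {}"
    using assms unfolding cfg_def by auto
  have "card (pts X K) = (\<Sum>k\<in>K. card (translate X k))"
    unfolding pts_def
    by (rule card_UN_disjoint[OF fK _ dj]) (simp add: translate_def fX)
  also have "\<dots> = g * h" using c assms by (simp add: cfg_def)
  finally show ?thesis by simp
qed

lemma subsets_card_le:
  assumes "finite A"
  shows "card {Y. Y \<subseteq> A \<and> card Y = k} \<le> card A ^ k"
proof (cases "k \<le> card A")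
  case True
  then show ?thesis using n_subsets[OF assms, of k] binomial_le_pow[OF True] by simp
next
  case False
  then show ?thesis using n_subsets[OF assms, of k] by (simp add: binomial_eq_0)
qed

lemma B_bound:
  assumes "h \<ge> 1" "g \<ge> 1"
  shows "finite {P. \<exists>X K. cfg h g X K \<and> P = pts X K \<and> P \<subseteq> {1..int n}} \<and>
         card {P. \<exists>X K. cfg h g X K \<and> P = pts X K \<and> P \<subseteq> {1..int n}} \<le> n ^ (h + g - 1)"
proof -
  define B where "B = {P. \<exists>X K. cfg h g X K \<and> P = pts X K \<and> P \<subseteq> {1..int n}}"
  define YS where "YS = {Y. Y \<subseteq> {1..int n - 1} \<and> card Y = h - 1}"
  define KS where "KS = {K. K \<subseteq> {1..int n} \<and> card K = g}"
  define F where "F = (\<lambda>(Y,K). pts (insert 0 Y) K)"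
  have sub: "B \<subseteq> F ` (YS \<times> KS)"
  proof
    fix P assume "P \<in> B"
    then obtain X K where XK: "cfg h g X K" "P = pts X K" "P \<subseteq> {1..int n}" unfolding B_def by blast
    have fX: "finite X" and cX: "card X = h" and fK: "finite K" and cK: "card K = g"
      using XK(1) unfolding cfg_def by auto
    have "X \<noteq> {}" using cX assms by auto
    have "K \<noteq> {}" using cK assms by auto
    then obtain k0 where k0: "k0 \<in> K" by blast
    define x0 where "x0 = Min X"
    have x0X: "x0 \<in> X" unfolding x0_def using fX \<open>X \<noteq> {}\<close> by simp
    have x0le: "\<And>x. x \<in> X \<Longrightarrow> x0 \<le> x" unfolding x0_def using fX by simp
    have inP: "\<And>x k. x \<in> X \<Longrightarrow> k \<in> K \<Longrightarrow> x + k \<in> {1..int n}"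
    proof -
      fix x k assume "x \<in> X" "k \<in> K"
      then have "x + k \<in> pts X K" unfolding pts_eq by force
      then show "x + k \<in> {1..int n}" using XK by blast
    qed
    define X' where "X' = (\<lambda>x. x - x0) ` X"
    define K' where "K' = (\<lambda>k. k + x0) ` K"
    have pe: "pts X' K' = P"
    proof
      show "pts X' K' \<subseteq> P"
      proof
        fix z assume "z \<in> pts X' K'"
        then obtain x k where "x \<in> X" "k \<in> K" "z = (x - x0) + (k + x0)"
          unfolding pts_eq X'_def K'_def by auto
        then have "z = x + k" "x \<in> X" "k \<in> K" by auto
        then show "z \<in> P" unfolding XK(2) pts_eq by force
      qed
      show "P \<subseteq> pts X' K'"
      proof
        fix z assume "z \<in> P"
        then obtain x k where xk: "x \<in> X" "k \<in> K" "z = x + k"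
          unfolding XK(2) pts_eq by auto
        have "x - x0 \<in> X'" "k + x0 \<in> K'" using xk unfolding X'_def K'_def by auto
        moreover have "z = (x - x0) + (k + x0)" using xk by simp
        ultimately show "z \<in> pts X' K'" unfolding pts_eq
          using rev_image_eqI[of "(x - x0, k + x0)" "X' \<times> K'" z "\<lambda>(x, y). x + y"] by simp
      qed
    qed
    have X'sub: "X' \<subseteq> {0..int n - 1}"
    proof
      fix y assume "y \<in> X'"
      then obtain x where x: "x \<in> X" "y = x - x0" unfolding X'_def by auto
      have "x + k0 \<le> int n" using inP[OF x(1) k0] by simp
      moreover have "x0 + k0 \<ge> 1" using inP[OF x0X k0] by simp
      moreover have "x0 \<le> x" using x0le[OF x(1)] .
      ultimately show "y \<in> {0..int n - 1}" using x by simp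
    qed
    have K'sub: "K' \<subseteq> {1..int n}"
    proof
      fix k' assume "k' \<in> K'"
      then obtain k where k: "k \<in> K" "k' = k + x0" unfolding K'_def by auto
      show "k' \<in> {1..int n}" using inP[OF x0X k(1)] k by (simp add: add.commute)
    qed
    have cX': "card X' = h" unfolding X'_def using cX by (simp add: card_image inj_on_def)
    have cK': "card K' = g" unfolding K'_def using cK by (simp add: card_image inj_on_def)
    have fX': "finite X'" unfolding X'_def using fX by simp
    have zero: "0 \<in> X'" unfolding X'_def using x0X by force
    define Y where "Y = X' - {0}"
    have "Y \<subseteq> {1..int n - 1}" unfolding Y_def using X'sub by auto
    moreover have "card Y = h - 1" unfolding Y_def using cX' fX' zero by simp
    ultimately have YY: "Y \<in> YS" unfolding YS_def by simp
    have KK: "K' \<in> KS" unfolding KS_def using K'sub cK' by simp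
    have "insert 0 Y = X'" unfolding Y_def using zero by blast
    then have "F (Y, K') = P" unfolding F_def using pe by simp
    then show "P \<in> F ` (YS \<times> KS)" using YY KK by force
  qed
  have fYS: "finite YS" unfolding YS_def
    by (rule finite_subset[of _ "Pow {1..int n - 1}"]) auto
  have fKS: "finite KS" unfolding KS_def
    by (rule finite_subset[of _ "Pow {1..int n}"]) auto
  have c1: "card YS \<le> n ^ (h - 1)"
  proof -
    have "card YS \<le> card {1..int n - 1} ^ (h - 1)" unfolding YS_def by (rule subsets_card_le) simp
    also have "\<dots> \<le> n ^ (h - 1)" by (rule power_mono) auto
    finally show ?thesis .
  qed
  have c2: "card KS \<le> n ^ g"
  proof -
    have "card KS \<le> card {1..int n} ^ g" unfolding KS_def by (rule subsets_card_le) simp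
    also have "\<dots> = n ^ g" by simp
    finally show ?thesis .
  qed
  have fB: "finite B" using sub fYS fKS by (meson finite_SigmaI finite_imageI finite_subset)
  have "card B \<le> card (F ` (YS \<times> KS))" using sub fYS fKS by (simp add: card_mono)
  also have "\<dots> \<le> card (YS \<times> KS)" by (rule card_image_le) (use fYS fKS in simp)
  also have "\<dots> = card YS * card KS" by (simp add: card_cartesian_product)
  also have "\<dots> \<le> n ^ (h - 1) * n ^ g" using c1 c2 by (rule mult_le_mono)
  also have "\<dots> = n ^ (h + g - 1)" using assms by (simp add: power_add[symmetric])
  finally show ?thesis using fB unfolding B_def by simp
qed

lemma real_rearr: "x * (c * (m * m') / N) = c * m * (x * m') / (N::real)"
  by (simp add: ac_simps)

lemma main_lemma:
  assumes h: "h \<ge> 2" and g: "g \<ge> 2" and n: "n \<ge> 1" and mn: "m \<le> n"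
    and ineq: "2 * real n ^ (h + g - 1) * real m ^ (h * g - 1) \<le> real n ^ (h * g)"
  shows "\<exists>A. A \<subseteq> {1..int n} \<and> weak_Ch_g h g A \<and> real m / 2 \<le> real (card A)"
proof -
  define U where "U = {1..int n}"
  define t where "t = h * g"
  define a where "a = h + g - 1"
  define B where "B = {P. \<exists>X K. cfg h g X K \<and> P = pts X K \<and> P \<subseteq> U}"
  define F where "F = {S. S \<subseteq> U \<and> card S = m}"
  define Bad where "Bad S = {P \<in> B. P \<subseteq> S}" for S
  have fU: "finite U" and cU: "card U = n" unfolding U_def by auto
  have BB: "finite B" "card B \<le> n ^ a" using B_bound[of h g n] h g unfolding B_def U_def a_def by auto
  have fF: "finite F" unfolding F_def by (rule finite_subset[of _ "Pow U"]) (use fU in auto)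
  have cF: "card F = n choose m" unfolding F_def using n_subsets[OF fU, of m] cU by simp
  have Fne: "F \<noteq> {}" using cF mn by auto
  have cardBad: "card (Bad S) = (\<Sum>P\<in>B. if P \<subseteq> S then 1 else 0)" for S
    using sum.inter_filter[OF BB(1), of "\<lambda>_. 1::nat" "\<lambda>P. P \<subseteq> S"] unfolding Bad_def by simp
  have swap: "(\<Sum>S\<in>F. card (Bad S)) = (\<Sum>P\<in>B. card {S. S \<subseteq> U \<and> card S = m \<and> P \<subseteq> S})"
  proof -
    have "(\<Sum>S\<in>F. card (Bad S)) = (\<Sum>S\<in>F. \<Sum>P\<in>B. if P \<subseteq> S then 1 else 0)"
      using cardBad by simp
    also have "\<dots> = (\<Sum>P\<in>B. \<Sum>S\<in>F. if P \<subseteq> S then 1 else 0)" by (rule sum.swap)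
    also have "\<dots> = (\<Sum>P\<in>B. card {S \<in> F. P \<subseteq> S})"
      using sum.inter_filter[OF fF, of "\<lambda>_. 1::nat"] by simp
    also have "\<dots> = (\<Sum>P\<in>B. card {S. S \<subseteq> U \<and> card S = m \<and> P \<subseteq> S})"
      unfolding F_def by (rule sum.cong) (auto intro: arg_cong[where f=card])
    finally show ?thesis .
  qed
  have npos: "real n ^ t > 0" using n by simp
  have each: "real (card {S. S \<subseteq> U \<and> card S = m \<and> P \<subseteq> S}) \<le> real (n choose m) * real m ^ t / real n ^ t"
    if PB: "P \<in> B" for P
  proof -
    obtain X K where XK: "cfg h g X K" "P = pts X K" "P \<subseteq> U" using PB unfolding B_def by blast
    have "card P = t" using card_pts[OF XK(1)] XK(2) unfolding t_def by simp
    then have "real (card {S. S \<subseteq> U \<and> card S = m \<and> P \<subseteq> S}) * real n ^ t \<le> real (n choose m) * real m ^ t"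
      using sub_count_bound[OF fU cU XK(3) _ mn] by simp
    then show ?thesis using npos by (simp add: field_simps)
  qed
  have "0 < t" unfolding t_def using h g by simp
  then have t1: "t = Suc (t - 1)" by simp
  have mt: "real m ^ t = real m * real m ^ (t - 1)"
    by (metis t1 power_Suc)
  have "real (\<Sum>S\<in>F. card (Bad S)) = (\<Sum>P\<in>B. real (card {S. S \<subseteq> U \<and> card S = m \<and> P \<subseteq> S}))"
    unfolding swap by simp
  also have "\<dots> \<le> (\<Sum>P\<in>B. real (n choose m) * real m ^ t / real n ^ t)"
    by (rule sum_mono) (rule each)
  also have "\<dots> = real (card B) * (real (n choose m) * real m ^ t / real n ^ t)" by simp
  also have "\<dots> \<le> real n ^ a * (real (n choose m) * real m ^ t / real n ^ t)"
    apply (rule mult_right_mono)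
    using BB(2) apply (metis of_nat_le_iff of_nat_power)
    by simp
  also have "\<dots> = real (n choose m) * real m * (real n ^ a * real m ^ (t - 1)) / real n ^ t"
    by (simp only: mt real_rearr)
  also have "\<dots> \<le> real (n choose m) * real m * (real n ^ t / 2) / real n ^ t"
    apply (rule divide_right_mono)
     apply (rule mult_left_mono)
    using ineq unfolding a_def t_def by auto
  also have "\<dots> = real (card F) * (real m / 2)" using npos cF by simp
  finally have sumle: "real (\<Sum>S\<in>F. card (Bad S)) \<le> real (card F) * (real m / 2)" .
  have "\<exists>S\<in>F. real (card (Bad S)) \<le> real m / 2"
  proof (rule ccontr)
    assume "\<not> (\<exists>S\<in>F. real (card (Bad S)) \<le> real m / 2)"
    then have lt: "\<And>S. S \<in> F \<Longrightarrow> real m / 2 < real (card (Bad S))" by auto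
    have "(\<Sum>S\<in>F. real m / 2) < (\<Sum>S\<in>F. real (card (Bad S)))"
      by (rule sum_strict_mono[OF fF Fne lt])
    then show False using sumle by simp
  qed
  then obtain S where S: "S \<in> F" "real (card (Bad S)) \<le> real m / 2" by blast
  have SU: "S \<subseteq> U" and cS: "card S = m" using S(1) unfolding F_def by auto
  define D where "D = (\<lambda>P. SOME x. x \<in> P) ` Bad S"
  define A where "A = S - D"
  have fBad: "finite (Bad S)" unfolding Bad_def using BB(1) by simp
  have "card S - card D \<le> card A" unfolding A_def by (rule diff_card_le_card_Diff) (simp add: D_def fBad)
  moreover have "card D \<le> card (Bad S)" unfolding D_def by (rule card_image_le[OF fBad])
  ultimately have "card S \<le> card A + card (Bad S)" by linarith
  then have "real m \<le> real (card A) + real (card (Bad S))" using cS by linarith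
  then have cardA: "real m / 2 \<le> real (card A)" using S(2) by linarith
  have weak: "weak_Ch_g h g A"
    unfolding weak_iff
  proof
    assume "\<exists>X K. cfg h g X K \<and> pts X K \<subseteq> A"
    then obtain X K where XK: "cfg h g X K" "pts X K \<subseteq> A" by blast
    have "pts X K \<subseteq> S" using XK(2) unfolding A_def by blast
    moreover then have "pts X K \<subseteq> U" using SU by blast
    ultimately have inBad: "pts X K \<in> Bad S" unfolding Bad_def B_def using XK(1) by blast
    have "card (pts X K) = h * g" by (rule card_pts[OF XK(1)])
    moreover have "h * g \<noteq> 0" using h g by simp
    ultimately have "pts X K \<noteq> {}" by (metis card.empty)
    then obtain y where "y \<in> pts X K" by blast
    then have mem: "(SOME x. x \<in> pts X K) \<in> pts X K" by (rule someI)
    have "(SOME x. x \<in> pts X K) \<in> D" unfolding D_def using inBad by blast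
    then show False using mem XK(2) unfolding A_def by blast
  qed
  have "A \<subseteq> {1..int n}" using SU unfolding A_def U_def by blast
  then show ?thesis using weak cardA by blast
qed

lemma singleton_weak:
  assumes "h \<ge> 2" "g \<ge> 2"
  shows "weak_Ch_g h g {1}"
  unfolding weak_iff
proof
  assume "\<exists>X K. cfg h g X K \<and> pts X K \<subseteq> {1}"
  then obtain X K where XK: "cfg h g X K" "pts X K \<subseteq> {1}" by blast
  have "card (pts X K) \<le> card {1::int}" by (rule card_mono) (use XK in auto)
  moreover have "card (pts X K) = h * g" by (rule card_pts[OF XK(1)])
  moreover have "h * g \<ge> 2 * 2" using assms by (intro mult_le_mono) auto
  ultimately show False by simp
qed

theorem theorem2:
  fixes g h :: nat
  assumes "h \<ge> 2" and "g \<ge> h"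
  shows "\<exists>c::real. c > 0 \<and>
           (\<forall>n::nat. n \<ge> 1 \<longrightarrow>
              (\<exists>A::int set. A \<subseteq> {1..int n} \<and> weak_Ch_g h g A \<and>
                 real (card A) \<ge> c * real n powr
                   ((1 - 1 / real h) * (1 - 1 / real g) * (1 + 1 / (real h * real g - 1)))))"
proof -
  define e where "e = (1 - 1 / real h) * (1 - 1 / real g) * (1 + 1 / (real h * real g - 1))"
  define t where "t = h * g"
  define a where "a = h + g - 1"
  have h2: "h \<ge> 2" and g2: "g \<ge> 2" using assms by auto
  have hg1: "h * g \<ge> h * 2" "h * g \<ge> 2 * g" using h2 g2 by (intro mult_le_mono; simp)+
  have at: "a \<le> t" unfolding a_def t_def using hg1 by linarith
  have t4: "t \<ge> 4" unfolding t_def using hg1 h2 by linarith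
  have HG: "real h * real g - 1 > 0"
  proof -
    have "real h * real g \<ge> 2 * 2" using h2 g2 by (intro mult_mono) auto
    then show ?thesis by simp
  qed
  have ta: "real (t - a) = real h * real g - real h - real g + 1"
    using at h2 unfolding t_def a_def by (simp add: of_nat_diff)
  have t1: "real (t - 1) = real h * real g - 1"
  proof -
    have "1 \<le> t" using t4 by simp
    then have "real (t - 1) = real t - 1" by (simp add: of_nat_diff)
    then show ?thesis unfolding t_def by simp
  qed
  have eq: "real (t - 1) * e = real (t - a)"
    unfolding t1 ta e_def using HG h2 g2 by (simp add: field_simps)
  have e1: "e \<le> 1"
  proof -
    have "real (t - a) \<le> real (t - 1)" using h2 g2 unfolding a_def by simp
    then have "real (t - 1) * e \<le> real (t - 1) * 1" using eq by simp
    moreover have "real (t - 1) > 0" using t4 by simp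
    ultimately show ?thesis by simp
  qed
  have "\<forall>n::nat. n \<ge> 1 \<longrightarrow>
              (\<exists>A::int set. A \<subseteq> {1..int n} \<and> weak_Ch_g h g A \<and>
                 real (card A) \<ge> (1/8) * real n powr e)"
  proof (intro allI impI)
    fix n :: nat assume n: "n \<ge> 1"
    have npos: "real n > 0" using n by simp
    show "\<exists>A::int set. A \<subseteq> {1..int n} \<and> weak_Ch_g h g A \<and> real (card A) \<ge> (1/8) * real n powr e"
    proof (cases "real n powr e < 4")
      case True
      have "{1::int} \<subseteq> {1..int n}" using n by simp
      moreover have "real (card {1::int}) \<ge> (1/8) * real n powr e" using True by simp
      ultimately show ?thesis using singleton_weak[OF h2 g2] by blast
    next
      case False
      define x where "x = real n powr e"
      have x4: "x \<ge> 4" using False unfolding x_def by simp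
      define m where "m = nat \<lfloor>x / 2\<rfloor>"
      have fl: "real_of_int \<lfloor>x / 2\<rfloor> \<le> x / 2" by (rule of_int_floor_le)
      have fl0: "\<lfloor>x / 2\<rfloor> \<ge> 0" using x4 by simp
      have m1: "real m \<le> x / 2" unfolding m_def using fl fl0 by simp
      have m2: "real m \<ge> x / 2 - 1" unfolding m_def using x4 by linarith
      have "x \<le> real n powr 1" unfolding x_def using e1 n by (intro powr_mono) auto
      then have "real m \<le> real n" using m1 npos by simp
      then have mn: "m \<le> n" by simp
      have xp: "x ^ (t - 1) = real n ^ (t - a)"
      proof -
        have "x ^ (t - 1) = real n powr (real (t - 1) * e)" unfolding x_def
          using npos by (simp add: powr_power)
        also have "\<dots> = real n powr real (t - a)" using eq by simp
        also have "\<dots> = real n ^ (t - a)" using npos by (rule powr_realpow)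
        finally show ?thesis .
      qed
      have "real m ^ (t - 1) \<le> (x / 2) ^ (t - 1)" using m1 by (intro power_mono) auto
      also have "\<dots> = real n ^ (t - a) / 2 ^ (t - 1)" using xp by (simp add: power_divide)
      also have "\<dots> \<le> real n ^ (t - a) / 2"
      proof -
        have "(2::real) ^ 1 \<le> 2 ^ (t - 1)" using t4 by (intro power_increasing) auto
        then show ?thesis using npos by (intro divide_left_mono) auto
      qed
      finally have mb: "real m ^ (t - 1) \<le> real n ^ (t - a) / 2" .
      have "2 * real n ^ a * real m ^ (t - 1) \<le> 2 * real n ^ a * (real n ^ (t - a) / 2)"
        using mb npos by (intro mult_left_mono) auto
      also have "\<dots> = real n ^ (a + (t - a))" by (simp add: power_add)
      also have "\<dots> = real n ^ t" using at by simp
      finally have ineq: "2 * real n ^ (h + g - 1) * real m ^ (h * g - 1) \<le> real n ^ (h * g)"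
        unfolding a_def t_def .
      obtain A where A: "A \<subseteq> {1..int n}" "weak_Ch_g h g A" "real m / 2 \<le> real (card A)"
        using main_lemma[OF h2 g2 n mn ineq] by blast
      have "(1/8) * real n powr e \<le> real m / 2" using m2 x4 unfolding x_def by simp
      then show ?thesis using A by (intro exI[of _ A]) simp
    qed
  qed
  then show ?thesis unfolding e_def by (intro exI[of _ "1/8"]) simp
qed

end
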